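(* Let $\Gamma$ be a graph such that $\chi(\overline{\Gamma})=k$. Let $H$ be a graph and suppose $F$ is a bipartite graph on $k$ vertices which does not contain any graph in $\mathcal{F}_H$ as a subgraph. Then $\Gamma$ has a subgraph $G$ with at least $e(\Gamma)e(F)/\binom{k}{2}$ edges that does not contain $H$ as an induced subgraph.
   Context: For a graph $H$ and a vertex partition $V(H)=V_1\sqcup\dots\sqcup V_k$, the quotient graph is the graph on $\{1,\dots,k\}$ in which $i\ne j$ are adjacent if some vertex of $V_i$ is adjacent in $H$ to some vertex of $V_j$. If every $V_i$ is a clique in $H$, this is a clique quotient of $H$. $\mathcal{F}_H$ denotes the family of bipartite graphs that are clique quotients of $H$. $\overline{\Gamma}$ is the complement of $\Gamma$ and $\chi$ denotes chromatic number. *)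

theory Defs
  imports Complex_Main
begin

definition graph :: "'a set \<Rightarrow> 'a set set \<Rightarrow> bool" where
  "graph V E \<longleftrightarrow> finite V \<and> (\<forall>e\<in>E. e \<subseteq> V \<and> card e = 2)"

definition complement :: "'a set \<Rightarrow> 'a set set \<Rightarrow> 'a set set" where
  "complement V E = {{u, v} | u v. u \<in> V \<and> v \<in> V \<and> u \<noteq> v \<and> {u, v} \<notin> E}"

definition proper_colouring :: "'a set \<Rightarrow> 'a set set \<Rightarrow> nat \<Rightarrow> ('a \<Rightarrow> nat) \<Rightarrow> bool" where
  "proper_colouring V E k c \<longleftrightarrow> (\<forall>v\<in>V. c v < k) \<and> (\<forall>u v. {u, v} \<in> E \<longrightarrow> c u \<noteq> c v)"

definition chromatic_number :: "'a set \<Rightarrow> 'a set set \<Rightarrow> nat" where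
  "chromatic_number V E = (LEAST k. \<exists>c. proper_colouring V E k c)"

definition bipartite :: "'a set \<Rightarrow> 'a set set \<Rightarrow> bool" where
  "bipartite V E \<longleftrightarrow> (\<exists>c. proper_colouring V E 2 c)"

definition contains_subgraph :: "'b set \<Rightarrow> 'b set set \<Rightarrow> 'a set \<Rightarrow> 'a set set \<Rightarrow> bool" where
  "contains_subgraph V2 E2 V1 E1 \<longleftrightarrow>
     (\<exists>f. inj_on f V1 \<and> f ` V1 \<subseteq> V2 \<and>
          (\<forall>u\<in>V1. \<forall>v\<in>V1. {u, v} \<in> E1 \<longrightarrow> {f u, f v} \<in> E2))"

definition contains_induced :: "'b set \<Rightarrow> 'b set set \<Rightarrow> 'a set \<Rightarrow> 'a set set \<Rightarrow> bool" where
  "contains_induced V2 E2 V1 E1 \<longleftrightarrow>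
     (\<exists>f. inj_on f V1 \<and> f ` V1 \<subseteq> V2 \<and>
          (\<forall>u\<in>V1. \<forall>v\<in>V1. u \<noteq> v \<longrightarrow> ({u, v} \<in> E1 \<longleftrightarrow> {f u, f v} \<in> E2)))"

text \<open>A partition V = V_1 \<squnion> ... \<squnion> V_m into nonempty parts is encoded by a labelling
  p : V \<rightarrow> {1..m} that is onto {1..m}; V_i = {v \<in> V. p v = i}.\<close>
definition vertex_partition :: "'a set \<Rightarrow> nat \<Rightarrow> ('a \<Rightarrow> nat) \<Rightarrow> bool" where
  "vertex_partition V m p \<longleftrightarrow> p ` V = {1..m}"

definition quotient_edges :: "'a set \<Rightarrow> 'a set set \<Rightarrow> nat \<Rightarrow> ('a \<Rightarrow> nat) \<Rightarrow> nat set set" where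
  "quotient_edges V E m p =
     {{i, j} | i j. i \<in> {1..m} \<and> j \<in> {1..m} \<and> i \<noteq> j \<and>
        (\<exists>u\<in>V. \<exists>v\<in>V. p u = i \<and> p v = j \<and> {u, v} \<in> E)}"

definition clique_partition :: "'a set \<Rightarrow> 'a set set \<Rightarrow> nat \<Rightarrow> ('a \<Rightarrow> nat) \<Rightarrow> bool" where
  "clique_partition V E m p \<longleftrightarrow> vertex_partition V m p \<and>
     (\<forall>u\<in>V. \<forall>v\<in>V. u \<noteq> v \<and> p u = p v \<longrightarrow> {u, v} \<in> E)"

definition FH :: "'a set \<Rightarrow> 'a set set \<Rightarrow> (nat set \<times> nat set set) set" where
  "FH V E = {({1..m}, quotient_edges V E m p) | m p.
               clique_partition V E m p \<and> bipartite {1..m} (quotient_edges V E m p)}"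

end

theory Submission
  imports Defs "HOL-Combinatorics.Permutations"
begin

lemma card_filter_sum: "finite A \<Longrightarrow> card {x\<in>A. P x} = (\<Sum>x\<in>A. if P x then 1 else (0::nat))"
  by (simp add: sum.If_cases Int_def)

lemma ordered_pairs_card:
  assumes "\<forall>e\<in>EF. e \<subseteq> VF \<and> card e = 2" "finite VF"
  shows "card {(a,b). a\<in>VF \<and> b\<in>VF \<and> a\<noteq>b \<and> {a,b}\<in>EF} = 2 * card EF"
proof -
  have fin: "finite EF" by (rule finite_subset[of EF "Pow VF"]) (use assms in auto)
  have eq: "{(a,b). a\<in>VF \<and> b\<in>VF \<and> a\<noteq>b \<and> {a,b}\<in>EF} = (\<Union>e\<in>EF. {(a,b). a\<noteq>b \<and> {a,b} = e})"
    using assms(1) by auto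
  have c2: "card {(a,b). a\<noteq>b \<and> {a,b} = e} = 2" if "e \<in> EF" for e
  proof -
    have "card e = 2" using assms(1) that by blast
    then obtain x y where xy: "e = {x,y}" "x \<noteq> y" unfolding card_2_iff by blast
    have "{(a,b). a\<noteq>b \<and> {a,b} = e} = {(x,y),(y,x)}" using xy by (auto simp: doubleton_eq_iff)
    then show ?thesis using xy by simp
  qed
  have fin2: "finite {(a,b). a\<noteq>b \<and> {a,b} = e}" if "e \<in> EF" for e
  proof (rule finite_subset[of _ "e \<times> e"])
    have "card e = 2" using assms(1) that by blast
    then have "finite e" by (intro card_ge_0_finite) simp
    then show "finite (e \<times> e)" by simp
    show "{(a,b). a\<noteq>b \<and> {a,b} = e} \<subseteq> e \<times> e" by blast
  qed
  have "card (\<Union>e\<in>EF. {(a,b). a\<noteq>b \<and> {a,b} = e}) = (\<Sum>e\<in>EF. card {(a,b). a\<noteq>b \<and> {a,b} = e})"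
  proof (rule card_UN_disjoint)
    show "finite EF" by (rule fin)
    show "\<forall>e\<in>EF. finite {(a,b). a\<noteq>b \<and> {a,b} = e}" using fin2 by blast
    show "\<forall>e\<in>EF. \<forall>e'\<in>EF. e \<noteq> e' \<longrightarrow> {(a,b). a\<noteq>b \<and> {a,b} = e} \<inter> {(a,b). a\<noteq>b \<and> {a,b} = e'} = {}"
    proof (intro ballI impI)
      fix e e' assume "e \<in> EF" "e' \<in> EF" "e \<noteq> e'"
      then show "{(a,b). a\<noteq>b \<and> {a,b} = e} \<inter> {(a,b). a\<noteq>b \<and> {a,b} = e'} = {}" by blast
    qed
  qed
  also have "\<dots> = (\<Sum>e\<in>EF. 2)" using c2 by (intro sum.cong) auto
  also have "\<dots> = 2 * card EF" by simp
  finally show ?thesis unfolding eq .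
qed


lemma transfer_pairs:
  assumes "bij_betw g K VF"
  shows "card {(i,j). i\<in>K \<and> j\<in>K \<and> i\<noteq>j \<and> {g i, g j}\<in>EF} = card {(a,b). a\<in>VF \<and> b\<in>VF \<and> a\<noteq>b \<and> {a,b}\<in>EF}"
proof -
  have inj: "inj_on g K" using assms bij_betw_def by blast
  have eqim: "(\<lambda>(i,j). (g i, g j)) ` {(i,j). i\<in>K \<and> j\<in>K \<and> i\<noteq>j \<and> {g i, g j}\<in>EF} = {(a,b). a\<in>VF \<and> b\<in>VF \<and> a\<noteq>b \<and> {a,b}\<in>EF}" (is "?L = ?R")
  proof
    show "?L \<subseteq> ?R"
    proof
      fix x assume "x \<in> ?L"
      then obtain p where p: "p \<in> {(i,j). i\<in>K \<and> j\<in>K \<and> i\<noteq>j \<and> {g i, g j}\<in>EF}" "x = (\<lambda>(i,j). (g i, g j)) p" by blast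
      obtain i j where "p = (i,j)" by fastforce
      then have ij: "x = (g i, g j)" "i\<in>K" "j\<in>K" "i\<noteq>j" "{g i, g j}\<in>EF" using p by auto
      have "g i \<in> VF" "g j \<in> VF" using ij bij_betw_apply[OF assms] by blast+
      moreover have "g i \<noteq> g j" using ij inj by (meson inj_onD)
      ultimately show "x \<in> ?R" using ij by blast
    qed
  next
    show "{(a,b). a\<in>VF \<and> b\<in>VF \<and> a\<noteq>b \<and> {a,b}\<in>EF} \<subseteq> (\<lambda>(i,j). (g i, g j)) ` {(i,j). i\<in>K \<and> j\<in>K \<and> i\<noteq>j \<and> {g i, g j}\<in>EF}"
    proof clarify
      fix a b assume h: "a\<in>VF" "b\<in>VF" "a\<noteq>b" "{a,b}\<in>EF"
      have "a \<in> g ` K" using h bij_betw_imp_surj_on[OF assms] by blast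
      then obtain i where i: "i\<in>K" "g i = a" by blast
      have "b \<in> g ` K" using h bij_betw_imp_surj_on[OF assms] by blast
      then obtain j where j: "j\<in>K" "g j = b" by blast
      show "(a,b) \<in> (\<lambda>(i,j). (g i, g j)) ` {(i,j). i\<in>K \<and> j\<in>K \<and> i\<noteq>j \<and> {g i, g j}\<in>EF}"
        using i j h by (intro image_eqI[of _ _ "(i,j)"]) auto
    qed
  qed
  moreover have injm: "inj_on (\<lambda>(i,j). (g i, g j)) {(i,j). i\<in>K \<and> j\<in>K \<and> i\<noteq>j \<and> {g i, g j}\<in>EF}"
  proof (rule inj_onI)
    fix p q assume pq: "p \<in> {(i,j). i\<in>K \<and> j\<in>K \<and> i\<noteq>j \<and> {g i, g j}\<in>EF}" "q \<in> {(i,j). i\<in>K \<and> j\<in>K \<and> i\<noteq>j \<and> {g i, g j}\<in>EF}"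
      "(\<lambda>(i,j). (g i, g j)) p = (\<lambda>(i,j). (g i, g j)) q"
    obtain a b where ab: "p = (a,b)" by fastforce
    obtain a' b' where ab': "q = (a',b')" by fastforce
    have "a\<in>K" "b\<in>K" "a'\<in>K" "b'\<in>K" "g a = g a'" "g b = g b'" using pq unfolding ab ab' by simp_all
    then show "p = q" unfolding ab ab' using inj_onD[OF inj] by simp
  qed
  show ?thesis unfolding eqim[symmetric] by (rule card_image[OF injm, symmetric])
qed


lemma exists_tau:
  assumes "i\<in>K" "j\<in>K" "i'\<in>K" "j'\<in>K" "i\<noteq>j" "i'\<noteq>j'"
  shows "\<exists>\<tau>. \<tau> permutes K \<and> \<tau> i' = i \<and> \<tau> j' = j"
proof -
  define t1 where "t1 = transpose i' i"
  have t1: "t1 permutes K" "t1 i' = i" using assms by (auto simp: t1_def permutes_swap_id)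
  have t1j: "t1 j' \<noteq> i" "t1 j' \<in> K" using assms t1 unfolding t1_def
    by (auto simp: transpose_def)
  define t2 where "t2 = transpose (t1 j') j"
  have t2: "t2 permutes K" "t2 i = i" "t2 (t1 j') = j" using assms t1j
    by (auto simp: t2_def permutes_swap_id transpose_def)
  show ?thesis using t1 t2 by (intro exI[of _ "t2 \<circ> t1"]) (auto intro: permutes_compose)
qed


lemma N_shift:
  assumes tau: "\<tau> permutes K" "\<tau> i' = i" "\<tau> j' = j"
  shows "card {\<pi>. \<pi> permutes K \<and> R (\<pi> i) (\<pi> j)} = card {\<pi>. \<pi> permutes K \<and> R (\<pi> i') (\<pi> j')}"
proof -
  have inv1: "inv \<tau> i = i'" "inv \<tau> j = j'" using tau permutes_inverses(2)[OF tau(1)] by metis+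
  have io: "\<tau> \<circ> inv \<tau> = id" "inv \<tau> \<circ> \<tau> = id" using permutes_inv_o[OF tau(1)] by auto
  have inj: "inj_on (\<lambda>\<pi>. \<pi> \<circ> \<tau>) {\<pi>. \<pi> permutes K \<and> R (\<pi> i) (\<pi> j)}"
  proof (rule inj_onI)
    fix p q assume "p \<circ> \<tau> = q \<circ> \<tau>"
    then have "p \<circ> \<tau> \<circ> inv \<tau> = q \<circ> \<tau> \<circ> inv \<tau>" by simp
    then show "p = q" using io by (simp add: o_assoc[symmetric])
  qed
  have im: "(\<lambda>\<pi>. \<pi> \<circ> \<tau>) ` {\<pi>. \<pi> permutes K \<and> R (\<pi> i) (\<pi> j)} = {\<pi>. \<pi> permutes K \<and> R (\<pi> i') (\<pi> j')}"
  proof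
    show "(\<lambda>\<pi>. \<pi> \<circ> \<tau>) ` {\<pi>. \<pi> permutes K \<and> R (\<pi> i) (\<pi> j)} \<subseteq> {\<pi>. \<pi> permutes K \<and> R (\<pi> i') (\<pi> j')}"
    proof
      fix x assume "x \<in> (\<lambda>\<pi>. \<pi> \<circ> \<tau>) ` {\<pi>. \<pi> permutes K \<and> R (\<pi> i) (\<pi> j)}"
      then obtain p where p: "p permutes K" "R (p i) (p j)" "x = p \<circ> \<tau>" by blast
      have "x permutes K" using p(3) permutes_compose[OF tau(1) p(1)] by simp
      moreover have "x i' = p i" "x j' = p j" using p(3) tau by auto
      ultimately show "x \<in> {\<pi>. \<pi> permutes K \<and> R (\<pi> i') (\<pi> j')}" using p(2) by simp
    qed
    show "{\<pi>. \<pi> permutes K \<and> R (\<pi> i') (\<pi> j')} \<subseteq> (\<lambda>\<pi>. \<pi> \<circ> \<tau>) ` {\<pi>. \<pi> permutes K \<and> R (\<pi> i) (\<pi> j)}"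
    proof
      fix s assume "s \<in> {\<pi>. \<pi> permutes K \<and> R (\<pi> i') (\<pi> j')}"
      then have s: "s permutes K" "R (s i') (s j')" by auto
      define p where "p = s \<circ> inv \<tau>"
      have "p permutes K" unfolding p_def using permutes_compose[OF permutes_inv[OF tau(1)] s(1)] .
      moreover have "p i = s i'" "p j = s j'" unfolding p_def using inv1 by auto
      moreover have "s = p \<circ> \<tau>" unfolding p_def using io by (simp add: o_assoc[symmetric])
      ultimately show "s \<in> (\<lambda>\<pi>. \<pi> \<circ> \<tau>) ` {\<pi>. \<pi> permutes K \<and> R (\<pi> i) (\<pi> j)}" using s(2) by auto
    qed
  qed
  show ?thesis unfolding im[symmetric] by (rule card_image[OF inj, symmetric])
qed


lemma count_N:
  assumes fK: "finite K" and g0: "bij_betw g0 K VF" and EF: "\<forall>e\<in>EF. e \<subseteq> VF \<and> card e = 2"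
    and ij: "i\<in>K" "j\<in>K" "i\<noteq>j"
  shows "card {\<pi>. \<pi> permutes K \<and> {g0 (\<pi> i), g0 (\<pi> j)} \<in> EF} * (card K * (card K - 1))
         = 2 * card EF * fact (card K)"
proof -
  define P where "P = {\<pi>. \<pi> permutes K}"
  have finP: "finite P" unfolding P_def using finite_permutations[OF fK] .
  have cardP: "card P = fact (card K)" unfolding P_def using card_permutations[OF refl fK] .
  have fVF: "finite VF" using g0 fK bij_betw_finite by blast
  define D where "D = Sigma K (\<lambda>a. K - {a})"
  have finD: "finite D" unfolding D_def using fK by simp
  have cardD: "card D = card K * (card K - 1)"
  proof -
    have "card D = (\<Sum>a\<in>K. card (K - {a}))" unfolding D_def using fK by simp
    also have "\<dots> = (\<Sum>a\<in>K. card K - 1)" using fK by (intro sum.cong) auto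
    finally show ?thesis by simp
  qed
  define Nf where "Nf x = card {\<pi>. \<pi> permutes K \<and> {g0 (\<pi> (fst x)), g0 (\<pi> (snd x))} \<in> EF}" for x :: "'a \<times> 'a"
  have const: "Nf x = Nf (i,j)" if xD: "x \<in> D" for x
  proof -
    obtain a b where x: "x = (a,b)" "a\<in>K" "b\<in>K" "a\<noteq>b" using xD unfolding D_def by (cases x) blast
    obtain \<tau> where "\<tau> permutes K" "\<tau> a = i" "\<tau> b = j" using exists_tau[OF ij(1,2) x(2,3) ij(3) x(4)] by blast
    from N_shift[OF this, of "\<lambda>u v. {g0 u, g0 v} \<in> EF"] show ?thesis unfolding Nf_def x by simp
  qed
  have "(\<Sum>x\<in>D. Nf x) = card D * Nf (i,j)" using const by simp
  moreover have "(\<Sum>x\<in>D. Nf x) = 2 * card EF * fact (card K)"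
  proof -
    have "(\<Sum>x\<in>D. Nf x) = (\<Sum>x\<in>D. \<Sum>\<pi>\<in>P. if {g0 (\<pi> (fst x)), g0 (\<pi> (snd x))} \<in> EF then 1 else 0)"
    proof (rule sum.cong[OF refl])
      fix x assume "x \<in> D"
      have "{\<pi>. \<pi> permutes K \<and> {g0 (\<pi> (fst x)), g0 (\<pi> (snd x))} \<in> EF} = {\<pi>\<in>P. {g0 (\<pi> (fst x)), g0 (\<pi> (snd x))} \<in> EF}"
        unfolding P_def by simp
      then show "Nf x = (\<Sum>\<pi>\<in>P. if {g0 (\<pi> (fst x)), g0 (\<pi> (snd x))} \<in> EF then 1 else 0)"
        unfolding Nf_def using card_filter_sum[OF finP] by simp
    qed
    also have "\<dots> = (\<Sum>\<pi>\<in>P. \<Sum>x\<in>D. if {g0 (\<pi> (fst x)), g0 (\<pi> (snd x))} \<in> EF then 1 else 0)"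
      by (rule sum.swap)
    also have "\<dots> = (\<Sum>\<pi>\<in>P. 2 * card EF)"
    proof (rule sum.cong[OF refl])
      fix \<pi> assume "\<pi> \<in> P"
      then have bp: "bij_betw (g0 \<circ> \<pi>) K VF" unfolding P_def
        using bij_betw_trans[OF permutes_imp_bij g0] by blast
      have "{x\<in>D. {g0 (\<pi> (fst x)), g0 (\<pi> (snd x))} \<in> EF} =
            {(a,b). a\<in>K \<and> b\<in>K \<and> a\<noteq>b \<and> {(g0 \<circ> \<pi>) a, (g0 \<circ> \<pi>) b}\<in>EF}"
        unfolding D_def by auto
      then have "card {x\<in>D. {g0 (\<pi> (fst x)), g0 (\<pi> (snd x))} \<in> EF} = 2 * card EF"
        using transfer_pairs[OF bp, of EF] ordered_pairs_card[OF EF fVF] by simp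
      then show "(\<Sum>x\<in>D. if {g0 (\<pi> (fst x)), g0 (\<pi> (snd x))} \<in> EF then 1 else 0) = 2 * card EF"
        using card_filter_sum[OF finD] by simp
    qed
    also have "\<dots> = 2 * card EF * fact (card K)" using cardP by simp
    finally show ?thesis .
  qed
  ultimately show ?thesis using cardD unfolding Nf_def by (simp add: mult.commute)
qed

lemma no_induced:
  assumes cK: "\<forall>v\<in>V. c v \<in> K" and gi: "inj_on g K" and gK: "g ` K \<subseteq> VF"
    and clq: "\<forall>u\<in>V. \<forall>v\<in>V. u \<noteq> v \<and> c u = c v \<longrightarrow> {u,v} \<in> E"
    and bip: "bipartite VF EF"
    and noF: "\<forall>(W, D) \<in> FH VH EH. \<not> contains_subgraph VF EF W D"
    and fH: "finite VH"
  shows "\<not> contains_induced V {e\<in>E. card (c ` e) = 1 \<or> (g \<circ> c) ` e \<in> EF} VH EH"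
proof
  define EG where "EG = {e\<in>E. card (c ` e) = 1 \<or> (g \<circ> c) ` e \<in> EF}"
  assume "contains_induced V {e\<in>E. card (c ` e) = 1 \<or> (g \<circ> c) ` e \<in> EF} VH EH"
  then obtain f where fi: "inj_on f VH" and fV: "f ` VH \<subseteq> V"
    and iso: "\<forall>u\<in>VH. \<forall>v\<in>VH. u \<noteq> v \<longrightarrow> ({u, v} \<in> EH \<longleftrightarrow> {f u, f v} \<in> EG)"
    unfolding contains_induced_def EG_def by blast
  define C where "C = (c \<circ> f) ` VH"
  have fC: "finite C" unfolding C_def using fH by simp
  have CK: "C \<subseteq> K" unfolding C_def using fV cK by auto
  define m where "m = card C"
  obtain h where h: "bij_betw h C {1..m}"
    using finite_same_card_bij[OF fC, of "{1..m}"] unfolding m_def by auto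
  have hi: "inj_on h C" and hC: "h ` C = {1..m}" using h by (auto simp: bij_betw_def)
  define p where "p = h \<circ> c \<circ> f"
  have vp: "vertex_partition VH m p" unfolding vertex_partition_def p_def using hC C_def
    by (simp add: image_comp)
  have cp: "clique_partition VH EH m p" unfolding clique_partition_def
  proof (intro conjI vp ballI impI)
    fix u v assume uv: "u \<in> VH" "v \<in> VH" "u \<noteq> v \<and> p u = p v"
    have "c (f u) \<in> C" "c (f v) \<in> C" using uv unfolding C_def by auto
    then have ceq: "c (f u) = c (f v)" using uv hi unfolding p_def by (simp add: inj_on_eq_iff)
    have "f u \<noteq> f v" using uv fi by (meson inj_onD)
    moreover have "f u \<in> V" "f v \<in> V" using uv fV by auto
    ultimately have "{f u, f v} \<in> E" using clq ceq by blast
    moreover have "card (c ` {f u, f v}) = 1" using ceq by simp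
    ultimately have "{f u, f v} \<in> EG" unfolding EG_def by blast
    then show "{u, v} \<in> EH" using iso uv by blast
  qed
  define Q where "Q = quotient_edges VH EH m p"
  define \<phi> where "\<phi> = g \<circ> inv_into C h"
  have \<phi>p: "\<phi> (p u) = g (c (f u))" if "u \<in> VH" for u
  proof -
    have "c (f u) \<in> C" using that unfolding C_def by auto
    then show ?thesis unfolding \<phi>_def p_def using hi by (simp add: inv_into_f_f)
  qed
  have keyEH: "{\<phi> (p u), \<phi> (p v)} \<in> EF" if uv: "u \<in> VH" "v \<in> VH" "{u,v} \<in> EH" "p u \<noteq> p v" for u v
  proof -
    have "u \<noteq> v" using uv by auto
    then have "{f u, f v} \<in> EG" using iso uv by blast
    moreover have "c (f u) \<noteq> c (f v)" using uv unfolding p_def by auto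
    ultimately have "(g \<circ> c) ` {f u, f v} \<in> EF" unfolding EG_def by auto
    then show ?thesis using \<phi>p uv by simp
  qed
  have keyQ: "{\<phi> x, \<phi> y} \<in> EF" if xyQ: "{x,y} \<in> Q" for x y
  proof -
    obtain i j u v where q: "{x,y} = {i,j}" "u \<in> VH" "v \<in> VH" "p u = i" "p v = j" "{u,v} \<in> EH" "i \<noteq> j"
      using xyQ unfolding Q_def quotient_edges_def by blast
    have "{\<phi> i, \<phi> j} \<in> EF" using keyEH[OF q(2,3,6)] q by simp
    moreover have "{\<phi> x, \<phi> y} = {\<phi> i, \<phi> j}" using q(1) by (auto simp: doubleton_eq_iff)
    ultimately show ?thesis by simp
  qed
  have \<phi>i: "inj_on \<phi> {1..m}"
  proof -
    have "inj_on (inv_into C h) {1..m}" using hC by (intro inj_on_inv_into) simp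
    moreover have "inv_into C h ` {1..m} \<subseteq> K" using hC CK by (auto intro: inv_into_into)
    ultimately show ?thesis unfolding \<phi>_def using gi by (meson comp_inj_on inj_on_subset)
  qed
  have \<phi>V: "\<phi> ` {1..m} \<subseteq> VF"
  proof -
    have "inv_into C h ` {1..m} \<subseteq> K" using hC CK by (auto intro: inv_into_into)
    then show ?thesis unfolding \<phi>_def using gK by (auto simp: image_comp[symmetric])
  qed
  have bQ: "bipartite {1..m} Q"
  proof -
    obtain d where d: "proper_colouring VF EF 2 d" using bip unfolding bipartite_def by blast
    have "proper_colouring {1..m} Q 2 (d \<circ> \<phi>)"
      unfolding proper_colouring_def
    proof (intro conjI allI impI ballI)
      fix v assume "v \<in> {1..m}"
      then have "\<phi> v \<in> VF" using \<phi>V by blast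
      then show "(d \<circ> \<phi>) v < 2" using d unfolding proper_colouring_def by simp
    next
      fix u v assume "{u, v} \<in> Q"
      then show "(d \<circ> \<phi>) u \<noteq> (d \<circ> \<phi>) v" using keyQ d unfolding proper_colouring_def by auto
    qed
    then show ?thesis unfolding bipartite_def by blast
  qed
  have "({1..m}, Q) \<in> FH VH EH" unfolding FH_def Q_def using cp bQ unfolding Q_def by blast
  moreover have "contains_subgraph VF EF {1..m} Q"
    unfolding contains_subgraph_def using \<phi>i \<phi>V keyQ by blast
  ultimately show False using noF by blast
qed

lemma L1: fixes x y z C a :: real assumes "C = a / 2" "x * a = 2 * y * z" shows "x * C = y * z"
proof -
  have "x * a = 2 * (x * C)" using assms(1) by simp
  then show ?thesis using assms(2) by linarith
qed
lemma L2: fixes x y z C B :: real assumes "C > 0" "x * C = y * z" "B = z * y / C" shows "B \<le> x"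
proof -
  have "B * C = z * y" using assms(1,3) by simp
  then have "B * C = x * C" using assms(2) by (simp add: mult.commute)
  then have "B = x" using assms(1) by simp
  then show ?thesis by simp
qed
lemma L3: fixes e f C B p :: real assumes "B = p * f / C" shows "e * B = p * (e * f / C)"
  using assms by simp

lemma averaging:
  fixes f :: "'x \<Rightarrow> real"
  assumes "finite A" "A \<noteq> {}" "(\<Sum>x\<in>A. f x) \<ge> real (card A) * b"
  shows "\<exists>x\<in>A. f x \<ge> b"
proof (rule ccontr)
  assume "\<not> ?thesis"
  then have "\<forall>x\<in>A. f x < b" by auto
  then have "(\<Sum>x\<in>A. f x) < (\<Sum>x\<in>A. b)" using assms(1,2) by (intro sum_strict_mono) auto
  then show False using assms(3) by simp
qed

lemma two_choose: "2 * (k choose 2) = k * (k - 1)"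
proof -
  have "even (k * (k - 1))" by (cases k) auto
  then show ?thesis by (simp add: choose_two dvd_mult_div_cancel)
qed

theorem lemma2p3:
  fixes V :: "'a set" and E :: "'a set set"
    and VH :: "'b set" and EH :: "'b set set"
    and VF :: "'c set" and EF :: "'c set set"
    and k :: nat
  assumes "graph V E"
    and "chromatic_number V (complement V E) = k"
    and "graph VH EH"
    and "graph VF EF" and "bipartite VF EF" and "card VF = k"
    and "\<forall>(W, D) \<in> FH VH EH. \<not> contains_subgraph VF EF W D"
  shows "\<exists>VG EG. graph VG EG \<and> VG \<subseteq> V \<and> EG \<subseteq> E \<and>
           real (card EG) \<ge> real (card E) * real (card EF) / real (k choose 2) \<and>
           \<not> contains_induced VG EG VH EH"
proof -
  have fV: "finite V" and Eprop: "\<forall>e\<in>E. e \<subseteq> V \<and> card e = 2" using assms(1) unfolding graph_def by auto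
  have fVF: "finite VF" and EFprop: "\<forall>e\<in>EF. e \<subseteq> VF \<and> card e = 2" using assms(4) unfolding graph_def by auto
  have fVH: "finite VH" using assms(3) unfolding graph_def by auto
  have finE: "finite E" by (rule finite_subset[of E "Pow V"]) (use Eprop fV in auto)
  obtain c0 where c0: "bij_betw c0 V {0..<card V}" using ex_bij_betw_finite_nat[OF fV] by blast
  have "proper_colouring V (complement V E) (card V) c0"
    unfolding proper_colouring_def
  proof (intro conjI allI impI ballI)
    fix v assume "v \<in> V" then show "c0 v < card V" using c0 bij_betw_apply by fastforce
  next
    fix x y assume "{x, y} \<in> complement V E"
    then obtain u v where uv: "{x,y} = {u,v}" "u \<in> V" "v \<in> V" "u \<noteq> v" unfolding complement_def by blast
    have "c0 u \<noteq> c0 v" using uv c0 by (metis bij_betw_def inj_onD)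
    then show "c0 x \<noteq> c0 y" using uv by (auto simp: doubleton_eq_iff)
  qed
  then have ex: "\<exists>n c. proper_colouring V (complement V E) n c" by blast
  have "\<exists>c. proper_colouring V (complement V E) (LEAST n. \<exists>c. proper_colouring V (complement V E) n c) c"
    by (rule LeastI_ex[OF ex])
  then obtain c where pc: "proper_colouring V (complement V E) k c"
    using assms(2) unfolding chromatic_number_def by auto
  define K where "K = {0..<k}"
  have cK: "\<forall>v\<in>V. c v \<in> K" using pc unfolding proper_colouring_def K_def by auto
  have clq: "\<forall>u\<in>V. \<forall>v\<in>V. u \<noteq> v \<and> c u = c v \<longrightarrow> {u,v} \<in> E"
  proof (intro ballI impI)
    fix u v assume uv: "u \<in> V" "v \<in> V" "u \<noteq> v \<and> c u = c v"
    show "{u,v} \<in> E"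
    proof (rule ccontr)
      assume "{u,v} \<notin> E"
      then have "{u,v} \<in> complement V E" using uv unfolding complement_def by blast
      then show False using pc uv unfolding proper_colouring_def by blast
    qed
  qed
  have fK: "finite K" and cardK: "card K = k" unfolding K_def by auto
  obtain g0 where g0: "bij_betw g0 K VF" using finite_same_card_bij[OF fK fVF] cardK assms(6) by auto
  define EG where "EG \<pi> = {e\<in>E. card (c ` e) = 1 \<or> ((g0 \<circ> \<pi>) \<circ> c) ` e \<in> EF}" for \<pi>
  have goodG: "graph V (EG \<pi>) \<and> V \<subseteq> V \<and> EG \<pi> \<subseteq> E \<and> \<not> contains_induced V (EG \<pi>) VH EH"
    if "\<pi> permutes K" for \<pi>
  proof -
    have bp: "bij_betw (g0 \<circ> \<pi>) K VF" using bij_betw_trans[OF permutes_imp_bij[OF that] g0] .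
    have "\<not> contains_induced V (EG \<pi>) VH EH" unfolding EG_def
      by (rule no_induced[OF cK _ _ clq assms(5) assms(7) fVH])
         (use bp in \<open>auto simp: bij_betw_def\<close>)
    moreover have "graph V (EG \<pi>)" using assms(1) unfolding graph_def EG_def by auto
    ultimately show ?thesis unfolding EG_def by auto
  qed
  have "\<exists>\<pi>. \<pi> permutes K \<and> real (card (EG \<pi>)) \<ge> real (card E) * real (card EF) / real (k choose 2)"
  proof (cases "k < 2")
    case True
    then have k0: "k choose 2 = 0" by simp
    show ?thesis by (intro exI[of _ id]) (simp add: permutes_id k0)
  next
    case False
    then have k2: "k \<ge> 2" by simp
    define P where "P = {\<pi>. \<pi> permutes K}"
    have finP: "finite P" unfolding P_def using finite_permutations[OF fK] .
    have cardP: "card P = fact k" unfolding P_def using card_permutations[OF cardK fK] .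
    have Pne: "P \<noteq> {}" unfolding P_def using permutes_id by blast
    have kc: "real (k choose 2) = real k * (real k - 1) / 2"
    proof -
      have "real (2 * (k choose 2)) = real (k * (k - 1))" by (simp only: two_choose)
      then show ?thesis using k2 by (simp add: of_nat_diff)
    qed
    have kpos: "real (k choose 2) > 0" using k2 by simp
    have EFle: "card EF \<le> k choose 2"
    proof -
      have "EF \<subseteq> {B. B \<subseteq> VF \<and> card B = 2}" using EFprop by auto
      then have "card EF \<le> card {B. B \<subseteq> VF \<and> card B = 2}"
        by (intro card_mono) (use fVF in auto)
      then show ?thesis using n_subsets[OF fVF, of 2] assms(6) by simp
    qed
    define B where "B = real (fact k) * real (card EF) / real (k choose 2)"
    have perE: "real (card {\<pi>\<in>P. e \<in> EG \<pi>}) \<ge> B" if eE: "e \<in> E" for e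
    proof -
      have "card e = 2" "e \<subseteq> V" using Eprop eE by auto
      then obtain u v where uv: "e = {u,v}" "u \<noteq> v" "u \<in> V" "v \<in> V" unfolding card_2_iff by auto
      show ?thesis
      proof (cases "c u = c v")
        case True
        then have "{\<pi>\<in>P. e \<in> EG \<pi>} = P" unfolding EG_def using eE uv by auto
        moreover have "B \<le> real (fact k)"
        proof -
          have "real (card EF) / real (k choose 2) \<le> 1" using EFle kpos by simp
          then have "real (fact k) * (real (card EF) / real (k choose 2)) \<le> real (fact k) * 1"
            by (intro mult_left_mono) auto
          then show ?thesis unfolding B_def by simp
        qed
        ultimately show ?thesis using cardP by simp
      next
        case False
        define N where "N = card {\<pi>. \<pi> permutes K \<and> {g0 (\<pi> (c u)), g0 (\<pi> (c v))} \<in> EF}"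
        have Neq: "card {\<pi>\<in>P. e \<in> EG \<pi>} = N"
        proof -
          have "{\<pi>\<in>P. e \<in> EG \<pi>} = {\<pi>. \<pi> permutes K \<and> {g0 (\<pi> (c u)), g0 (\<pi> (c v))} \<in> EF}"
            unfolding EG_def P_def using eE uv False by auto
          then show ?thesis unfolding N_def by simp
        qed
        have cuv: "c u \<in> K" "c v \<in> K" using cK uv by auto
        have "N * (k * (k - 1)) = 2 * card EF * fact k"
          using count_N[OF fK g0 EFprop cuv False] cardK unfolding N_def by simp
        then have "real (N * (k * (k - 1))) = real (2 * card EF * fact k)" by (simp only:)
        then have "real N * (real k * (real k - 1)) = 2 * real (card EF) * real (fact k)"
          using k2 by (simp add: of_nat_diff)
        then have "real (card {\<pi>\<in>P. e \<in> EG \<pi>}) * (real k * (real k - 1)) = 2 * real (card EF) * real (fact k)"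
          using Neq by simp
        then have "real (card {\<pi>\<in>P. e \<in> EG \<pi>}) * real (k choose 2) = real (card EF) * real (fact k)"
          by (rule L1[OF kc])
        then show ?thesis by (rule L2[OF kpos _ B_def])
      qed
    qed
    have sumeq: "(\<Sum>\<pi>\<in>P. card (EG \<pi>)) = (\<Sum>e\<in>E. card {\<pi>\<in>P. e \<in> EG \<pi>})"
    proof -
      have "(\<Sum>\<pi>\<in>P. card (EG \<pi>)) = (\<Sum>\<pi>\<in>P. \<Sum>e\<in>E. if e \<in> EG \<pi> then 1 else 0)"
      proof (rule sum.cong[OF refl])
        fix \<pi> have "EG \<pi> = {e\<in>E. e \<in> EG \<pi>}" unfolding EG_def by auto
        then show "card (EG \<pi>) = (\<Sum>e\<in>E. if e \<in> EG \<pi> then 1 else 0)"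
          using card_filter_sum[OF finE, of "\<lambda>e. e \<in> EG \<pi>"] by simp
      qed
      also have "\<dots> = (\<Sum>e\<in>E. \<Sum>\<pi>\<in>P. if e \<in> EG \<pi> then 1 else 0)" by (rule sum.swap)
      also have "\<dots> = (\<Sum>e\<in>E. card {\<pi>\<in>P. e \<in> EG \<pi>})"
        using card_filter_sum[OF finP] by simp
      finally show ?thesis .
    qed
    have "(\<Sum>\<pi>\<in>P. real (card (EG \<pi>))) = (\<Sum>e\<in>E. real (card {\<pi>\<in>P. e \<in> EG \<pi>}))"
      by (simp only: of_nat_sum[symmetric] sumeq)
    also have "\<dots> \<ge> (\<Sum>e\<in>E. B)" using perE by (intro sum_mono) auto
    also have "(\<Sum>e\<in>E. B) = real (card E) * B" by simp
    also have "\<dots> = real (fact k) * (real (card E) * real (card EF) / real (k choose 2))"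
      by (rule L3[OF B_def])
    finally have "(\<Sum>\<pi>\<in>P. real (card (EG \<pi>))) \<ge> real (card P) * (real (card E) * real (card EF) / real (k choose 2))"
      unfolding cardP .
    then obtain \<pi> where "\<pi> \<in> P" "real (card (EG \<pi>)) \<ge> real (card E) * real (card EF) / real (k choose 2)"
      using averaging[OF finP Pne] by blast
    then show ?thesis unfolding P_def by blast
  qed
  then obtain \<pi> where "\<pi> permutes K" "real (card (EG \<pi>)) \<ge> real (card E) * real (card EF) / real (k choose 2)"
    by blast
  then show ?thesis using goodG by blast
qed

end
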